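(* Let $E\in\mathcal E^{m,n}_{a,b}$, $A\subseteq[m]$ and $B\subseteq[n]$, and let $E'=E\cup(A\times[n])\cup([m]\times B)$. Then $E'\in\mathcal E^{m,n}_{a',b'}$, where $a'=\min(a+|A|,m)$ and $b'=\min(b+|B|,n)$.
   Context: For an $(m,m-a)$-code $C_1$ and an $(n,n-b)$-code $C_2$, the tensor code $C_1\otimes C_2$ consists of $m\times n$ arrays whose columns lie in $C_1$ and rows in $C_2$. An erasure pattern $E\subseteq[m]\times[n]$ is correctable if every codeword is determined by its entries outside $E$. $\mathcal E^{m,n}_{a,b}$ (over a fixed field characteristic) is the set of patterns $E\subseteq[m]\times[n]$ correctable by an $(m,n,a,b)$-maximally recoverable tensor code, i.e. by $C_1\otimes C_2$ where $C_1,C_2$ have generic generator matrices of sizes $(m-a)\times m$ and $(n-b)\times n$; when $a=m$ or $b=n$ the code is zero and every pattern is correctable. *)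

theory Defs
  imports Main
begin

text \<open>Indices are 0-based: [m] is {0..<m}. Vectors of length n are functions
nat => 'k vanishing outside {0..<n}; m x n arrays are functions nat => nat => 'k
vanishing outside {0..<m} x {0..<n}.\<close>

definition row_code :: "nat \<Rightarrow> nat \<Rightarrow> (nat \<Rightarrow> nat \<Rightarrow> 'k::field) \<Rightarrow> (nat \<Rightarrow> 'k) set" where
  "row_code k n G = {v. \<exists>u. \<forall>j. v j = (if j < n then (\<Sum>i<k. u i * G i j) else 0)}"

definition tensor_code :: "nat \<Rightarrow> nat \<Rightarrow> (nat \<Rightarrow> 'k::field) set \<Rightarrow> (nat \<Rightarrow> 'k) set
    \<Rightarrow> (nat \<Rightarrow> nat \<Rightarrow> 'k) set" where
  "tensor_code m n C1 C2 = {c. (\<forall>j<n. (\<lambda>i. c i j) \<in> C1) \<and> (\<forall>i<m. (\<lambda>j. c i j) \<in> C2)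
        \<and> (\<forall>i j. (m \<le> i \<or> n \<le> j) \<longrightarrow> c i j = 0)}"

definition correctable :: "nat \<Rightarrow> nat \<Rightarrow> (nat \<Rightarrow> nat \<Rightarrow> 'k) set \<Rightarrow> (nat \<times> nat) set \<Rightarrow> bool" where
  "correctable m n C E = (\<forall>c\<in>C. \<forall>c'\<in>C.
      (\<forall>i<m. \<forall>j<n. (i, j) \<notin> E \<longrightarrow> c i j = c' i j) \<longrightarrow> c = c')"

inductive_set polyfun :: "(('v \<Rightarrow> 'k::comm_ring_1) \<Rightarrow> 'k) set" where
  const: "(\<lambda>x. c) \<in> polyfun"
| var: "(\<lambda>x. x v) \<in> polyfun"
| add: "f \<in> polyfun \<Longrightarrow> g \<in> polyfun \<Longrightarrow> (\<lambda>x. f x + g x) \<in> polyfun"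
| mult: "f \<in> polyfun \<Longrightarrow> g \<in> polyfun \<Longrightarrow> (\<lambda>x. f x * g x) \<in> polyfun"

definition generically :: "(('v \<Rightarrow> 'k::comm_ring_1) \<Rightarrow> bool) \<Rightarrow> bool" where
  "generically P = (\<exists>f\<in>polyfun. (\<exists>x. f x \<noteq> 0) \<and> (\<forall>x. f x \<noteq> 0 \<longrightarrow> P x))"

text \<open>The set of erasure patterns E \<subseteq> [m] x [n] correctable by the (m,n,a,b)-maximally
recoverable tensor code over 'k: C1 \<otimes> C2 with generic generator matrices of sizes
(m-a) x m (entries x (Inl (i,j))) and (n-b) x n (entries x (Inr (i,j))).\<close>
definition MR_patterns :: "'k::field itself \<Rightarrow> nat \<Rightarrow> nat \<Rightarrow> nat \<Rightarrow> nat \<Rightarrow> (nat \<times> nat) set set" where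
  "MR_patterns _ m n a b = {E. E \<subseteq> {0..<m} \<times> {0..<n} \<and>
     (m \<le> a \<or> n \<le> b \<or>
      generically (\<lambda>x :: (nat \<times> nat) + (nat \<times> nat) \<Rightarrow> 'k.
        correctable m n
          (tensor_code m n (row_code (m - a) m (\<lambda>i j. x (Inl (i, j))))
                           (row_code (n - b) n (\<lambda>i j. x (Inr (i, j))))) E))}"

end

theory Submission
  imports Defs "Jordan_Normal_Form.Determinant" "HOL-Computational_Algebra.Polynomial"
begin


lemma polyfun_supp:
  assumes "f \<in> polyfun"
  shows "\<exists>V. finite V \<and> (\<forall>x y. (\<forall>v\<in>V. x v = y v) \<longrightarrow> f x = f y)"
  using assms
proof (induction rule: polyfun.induct)
  case (const c) then show ?case by auto
next
  case (var v) then show ?case by (intro exI[of _ "{v}"]) auto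
next
  case (add f g)
  then obtain V W where "finite V" "\<forall>x y. (\<forall>v\<in>V. x v = y v) \<longrightarrow> f x = f y"
    "finite W" "\<forall>x y. (\<forall>v\<in>W. x v = y v) \<longrightarrow> g x = g y" by blast
  then show ?case by (intro exI[of _ "V \<union> W"]) (simp, metis UnI1 UnI2)
next
  case (mult f g)
  then obtain V W where "finite V" "\<forall>x y. (\<forall>v\<in>V. x v = y v) \<longrightarrow> f x = f y"
    "finite W" "\<forall>x y. (\<forall>v\<in>W. x v = y v) \<longrightarrow> g x = g y" by blast
  then show ?case by (intro exI[of _ "V \<union> W"]) (simp, metis UnI1 UnI2)
qed

lemma polyfun_univ:
  assumes "f \<in> polyfun"
  shows "\<exists>p. \<forall>t. f (x(v:=t)) = poly p t"
  using assms
proof (induction rule: polyfun.induct)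
  case (const c) then show ?case by (intro exI[of _ "[:c:]"]) auto
next
  case (var w) show ?case
  proof (cases "w = v")
    case True then show ?thesis by (intro exI[of _ "[:0,1:]"]) auto
  next
    case False then show ?thesis by (intro exI[of _ "[:x w:]"]) auto
  qed
next
  case (add f g)
  then obtain p q where "\<forall>t. f (x(v:=t)) = poly p t" "\<forall>t. g (x(v:=t)) = poly q t" by blast
  then show ?case by (intro exI[of _ "p + q"]) (metis poly_add)
next
  case (mult f g)
  then obtain p q where "\<forall>t. f (x(v:=t)) = poly p t" "\<forall>t. g (x(v:=t)) = poly q t" by blast
  then show ?case by (intro exI[of _ "p * q"]) (metis poly_mult)
qed

lemma common_nonzero_aux:
  fixes f g :: "('v \<Rightarrow> 'k::field) \<Rightarrow> 'k"
  assumes inf: "infinite (UNIV :: 'k set)" and f: "f \<in> polyfun" and g: "g \<in> polyfun"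
    and D: "finite D"
  shows "\<forall>x0 x1. (\<forall>v. v \<notin> D \<longrightarrow> x0 v = x1 v) \<longrightarrow> f x0 \<noteq> 0 \<longrightarrow> g x1 \<noteq> 0
           \<longrightarrow> (\<exists>x. f x \<noteq> 0 \<and> g x \<noteq> 0)"
  using D
proof (induction D rule: finite_induct)
  case empty
  show ?case
  proof (intro allI impI)
    fix x0 x1 :: "'v \<Rightarrow> 'k"
    assume "\<forall>v. v \<notin> {} \<longrightarrow> x0 v = x1 v" "f x0 \<noteq> 0" "g x1 \<noteq> 0"
    moreover have "x0 = x1" using calculation(1) by (intro ext) simp
    ultimately show "\<exists>x. f x \<noteq> 0 \<and> g x \<noteq> 0" by auto
  qed
next
  case (insert v D)
  show ?case
  proof (intro allI impI)
    fix x0 x1 :: "'v \<Rightarrow> 'k"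
    assume dif: "\<forall>w. w \<notin> insert v D \<longrightarrow> x0 w = x1 w" and f0: "f x0 \<noteq> 0" and g1: "g x1 \<noteq> 0"
    obtain p where p: "\<forall>t. f (x0(v:=t)) = poly p t" using polyfun_univ[OF f] by blast
    obtain q where q: "\<forall>t. g (x1(v:=t)) = poly q t" using polyfun_univ[OF g] by blast
    have "poly p (x0 v) \<noteq> 0" using p f0 by (metis fun_upd_triv)
    hence pn: "p \<noteq> 0" by auto
    have "poly q (x1 v) \<noteq> 0" using q g1 by (metis fun_upd_triv)
    hence qn: "q \<noteq> 0" by auto
    have fin: "finite ({t. poly p t = 0} \<union> {t. poly q t = 0})"
      using poly_roots_finite[OF pn] poly_roots_finite[OF qn] by auto
    then obtain t where t: "t \<notin> {t. poly p t = 0} \<union> {t. poly q t = 0}"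
      using inf by (metis ex_new_if_finite)
    have "f (x0(v:=t)) \<noteq> 0" "g (x1(v:=t)) \<noteq> 0" using t p q by auto
    moreover have "\<forall>w. w \<notin> D \<longrightarrow> (x0(v:=t)) w = (x1(v:=t)) w" using dif by auto
    ultimately show "\<exists>x. f x \<noteq> 0 \<and> g x \<noteq> 0" using insert.IH by blast
  qed
qed

lemma common_nonzero:
  fixes f g :: "('v \<Rightarrow> 'k::field) \<Rightarrow> 'k"
  assumes inf: "infinite (UNIV :: 'k set)" and f: "f \<in> polyfun" and g: "g \<in> polyfun"
    and fx: "\<exists>x. f x \<noteq> 0" and gx: "\<exists>x. g x \<noteq> 0"
  shows "\<exists>x. f x \<noteq> 0 \<and> g x \<noteq> 0"
proof -
  obtain x0 x1 where f0: "f x0 \<noteq> 0" and g1: "g x1 \<noteq> 0" using fx gx by blast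
  obtain W where W: "finite W" "\<forall>x y. (\<forall>v\<in>W. x v = y v) \<longrightarrow> g x = g y"
    using polyfun_supp[OF g] by blast
  define x2 where "x2 = (\<lambda>v. if v \<in> W then x1 v else x0 v)"
  have "g x2 = g x1" using W(2) unfolding x2_def by auto
  hence "g x2 \<noteq> 0" using g1 by simp
  moreover have "\<forall>v. v \<notin> W \<longrightarrow> x0 v = x2 v" unfolding x2_def by auto
  ultimately show ?thesis using common_nonzero_aux[OF inf f g W(1)] f0 by blast
qed

lemma polyfun_sum:
  assumes "\<And>p. p \<in> S \<Longrightarrow> F p \<in> polyfun"
  shows "(\<lambda>x. \<Sum>p\<in>S. F p x) \<in> polyfun"
proof (cases "finite S")
  case True
  then show ?thesis using assms
    by (induction S rule: finite_induct) (auto intro: polyfun.intros)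
next
  case False
  then show ?thesis by (simp add: polyfun.const)
qed

lemma polyfun_prod:
  assumes "\<And>p. p \<in> S \<Longrightarrow> F p \<in> polyfun"
  shows "(\<lambda>x. \<Prod>p\<in>S. F p x) \<in> polyfun"
proof (cases "finite S")
  case True
  then show ?thesis using assms
    by (induction S rule: finite_induct) (auto intro: polyfun.intros)
next
  case False
  then show ?thesis by (simp add: polyfun.const)
qed

lemma polyfun_subst:
  assumes "f \<in> polyfun" and "\<And>v. (\<lambda>x. \<rho> x v) \<in> polyfun"
  shows "(\<lambda>x. f (\<rho> x)) \<in> polyfun"
  using assms by (induction rule: polyfun.induct) (auto intro: polyfun.intros)

lemma polyfun_det:
  fixes M :: "nat \<Rightarrow> nat \<Rightarrow> ('v \<Rightarrow> 'k::comm_ring_1) \<Rightarrow> 'k"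
  assumes "\<And>i l. M i l \<in> polyfun"
  shows "(\<lambda>x. det (mat k k (\<lambda>(i,l). M i l x))) \<in> polyfun"
proof -
  have "(\<lambda>x. \<Sum>p\<in>{p. p permutes {0..<k}}. signof p * (\<Prod>i = 0..<k. M i (p i) x)) \<in> polyfun"
    by (intro polyfun_sum polyfun.mult polyfun.const polyfun_prod assms)
  moreover have "det (mat k k (\<lambda>(i,l). M i l x)) =
     (\<Sum>p\<in>{p. p permutes {0..<k}}. signof p * (\<Prod>i = 0..<k. M i (p i) x))" for x
    unfolding det_def' [of "mat k k (\<lambda>(i,l). M i l x)" k, OF mat_carrier]
    by (intro sum.cong refl arg_cong2[where f="(*)"] prod.cong) (auto simp: permutes_def)
  ultimately show ?thesis by simp
qed



lemma det_indep:
  fixes M :: "nat \<Rightarrow> nat \<Rightarrow> 'k::field"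
  assumes d: "det (mat k k (\<lambda>(i,l). M i l)) \<noteq> 0" and s: "\<forall>l<k. (\<Sum>p<k. u p * M p l) = 0"
  shows "\<forall>p<k. u p = 0"
proof -
  define A where "A = mat k k (\<lambda>(l,p). M p l)"
  have At: "A = transpose_mat (mat k k (\<lambda>(i,l). M i l))"
    unfolding A_def by (rule eq_matI) auto
  have Ac: "A \<in> carrier_mat k k" unfolding A_def by simp
  have "det A \<noteq> 0" using d At det_transpose[of "mat k k (\<lambda>(i,l). M i l)" k] by simp
  hence nz: "\<not> (\<exists>v. v \<in> carrier_vec k \<and> v \<noteq> 0\<^sub>v k \<and> A *\<^sub>v v = 0\<^sub>v k)"
    using det_0_iff_vec_prod_zero_field[OF Ac] by blast
  have "A *\<^sub>v vec k u = 0\<^sub>v k"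
  proof (rule eq_vecI)
    fix l assume l: "l < dim_vec (0\<^sub>v k :: 'k vec)"
    hence "l < k" by simp
    have "(A *\<^sub>v vec k u) $ l = (\<Sum>p<k. M p l * u p)"
      unfolding A_def using \<open>l < k\<close>
      by (simp add: scalar_prod_def row_def atLeast0LessThan)
    also have "\<dots> = 0" using s \<open>l < k\<close> by (simp add: mult.commute)
    finally show "(A *\<^sub>v vec k u) $ l = 0\<^sub>v k $ l" using \<open>l<k\<close> by simp
  qed (simp add: A_def)
  hence "vec k u = 0\<^sub>v k" using nz vec_carrier[of k u] by blast
  then show ?thesis by (metis index_vec index_zero_vec(1))
qed



lemma row_code_diff:
  assumes "v \<in> row_code k n G" "w \<in> row_code k n G"
  shows "(\<lambda>j. v j - w j) \<in> row_code k n G"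
proof -
  obtain u where u: "\<forall>j. v j = (if j < n then (\<Sum>i<k. u i * G i j) else 0)"
    using assms(1) unfolding row_code_def by blast
  obtain u' where u': "\<forall>j. w j = (if j < n then (\<Sum>i<k. u' i * G i j) else 0)"
    using assms(2) unfolding row_code_def by blast
  have "\<forall>j. v j - w j = (if j < n then (\<Sum>i<k. (u i - u' i) * G i j) else 0)"
    using u u' by (simp add: left_diff_distrib sum_subtractf)
  then show ?thesis unfolding row_code_def mem_Collect_eq by (rule exI[of _ "\<lambda>i. u i - u' i"])
qed

lemma row_code_zero: "(\<lambda>j. 0) \<in> row_code k n G"
  unfolding row_code_def by (intro CollectI exI[of _ "\<lambda>_. 0"]) simp

lemma tensor_diff:
  assumes "c \<in> tensor_code m n (row_code k1 m G1) (row_code k2 n G2)"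
    "c' \<in> tensor_code m n (row_code k1 m G1) (row_code k2 n G2)"
  shows "(\<lambda>i j. c i j - c' i j) \<in> tensor_code m n (row_code k1 m G1) (row_code k2 n G2)"
  using assms unfolding tensor_code_def by (auto intro: row_code_diff)

lemma tensor_zero: "(\<lambda>i j. 0) \<in> tensor_code m n (row_code k1 m G1) (row_code k2 n G2)"
  unfolding tensor_code_def using row_code_zero by auto

definition colr :: "nat \<Rightarrow> nat \<Rightarrow> nat" where
  "colr r l = (if l < r then l else Suc l)"

lemma row_core:
  fixes Y X :: "nat \<Rightarrow> nat \<Rightarrow> 'k::field"
  assumes r: "r < m" and km: "k < m"
    and X: "\<forall>i<k. \<forall>j<m. X i j = (if j = r then 0 else Y i j) + Y i r * X k j"
    and corr: "correctable m n (tensor_code m n (row_code (Suc k) m X) (row_code l n G2)) E"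
    and dt: "det (mat k k (\<lambda>(i,l). Y i (colr r l))) \<noteq> 0"
  shows "correctable m n (tensor_code m n (row_code k m Y) (row_code l n G2)) (E \<union> {r} \<times> {0..<n})"
  unfolding correctable_def
proof (intro ballI impI)
  fix c c' assume c: "c \<in> tensor_code m n (row_code k m Y) (row_code l n G2)"
    and c': "c' \<in> tensor_code m n (row_code k m Y) (row_code l n G2)"
    and agree: "\<forall>i<m. \<forall>j<n. (i, j) \<notin> E \<union> {r} \<times> {0..<n} \<longrightarrow> c i j = c' i j"
  define d where "d = (\<lambda>i j. c i j - c' i j)"
  have d: "d \<in> tensor_code m n (row_code k m Y) (row_code l n G2)"
    unfolding d_def by (rule tensor_diff[OF c c'])
  define dt where "dt = (\<lambda>i j. if i = r then 0 else d i j)"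
  have dout: "\<forall>i j. (m \<le> i \<or> n \<le> j) \<longrightarrow> d i j = 0" using d unfolding tensor_code_def by blast
  have dcol: "\<forall>j<n. (\<lambda>i. d i j) \<in> row_code k m Y" using d unfolding tensor_code_def by blast
  have drow: "\<forall>i<m. (\<lambda>j. d i j) \<in> row_code l n G2" using d unfolding tensor_code_def by blast
  have dtT: "dt \<in> tensor_code m n (row_code (Suc k) m X) (row_code l n G2)"
    unfolding tensor_code_def
  proof (intro CollectI conjI allI impI)
    fix j assume j: "j < n"
    obtain u where u: "\<forall>i. d i j = (if i < m then (\<Sum>p<k. u p * Y p i) else 0)"
      using dcol j unfolding row_code_def by blast
    define u' where "u' = (\<lambda>p. if p < k then u p else - (\<Sum>p<k. u p * Y p r))"
    have "\<forall>i. dt i j = (if i < m then (\<Sum>p<Suc k. u' p * X p i) else 0)"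
    proof
      fix i
      show "dt i j = (if i < m then (\<Sum>p<Suc k. u' p * X p i) else 0)"
      proof (cases "i < m")
        case True
        have "(\<Sum>p<Suc k. u' p * X p i) = (\<Sum>p<k. u p * X p i) - (\<Sum>p<k. u p * Y p r) * X k i"
          by (simp add: u'_def)
        also have "(\<Sum>p<k. u p * X p i) = (\<Sum>p<k. u p * (if i = r then 0 else Y p i) + u p * Y p r * X k i)"
          using X True by (intro sum.cong) (auto simp: algebra_simps)
        also have "\<dots> = (\<Sum>p<k. u p * (if i = r then 0 else Y p i)) + (\<Sum>p<k. u p * Y p r) * X k i"
          by (simp add: sum.distrib sum_distrib_right)
        finally have "(\<Sum>p<Suc k. u' p * X p i) = (\<Sum>p<k. u p * (if i = r then 0 else Y p i))"
          by simp
        then show ?thesis using True u unfolding dt_def by auto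
      next
        case False
        then show ?thesis using r dout unfolding dt_def by auto
      qed
    qed
    then show "(\<lambda>i. dt i j) \<in> row_code (Suc k) m X" unfolding row_code_def by blast
  next
    fix i assume i: "i < m"
    show "(\<lambda>j. dt i j) \<in> row_code l n G2"
      using drow i row_code_zero unfolding dt_def by (cases "i = r") auto
  next
    fix i j assume "m \<le> i \<or> n \<le> j"
    then show "dt i j = 0" using dout unfolding dt_def by auto
  qed
  have ag: "\<forall>i<m. \<forall>j<n. (i, j) \<notin> E \<longrightarrow> dt i j = 0"
    using agree unfolding dt_def d_def by auto
  have "dt = (\<lambda>i j. 0)"
    by (rule corr[unfolded correctable_def, rule_format, OF dtT tensor_zero]) (use ag in simp)
  hence zr: "\<forall>i j. i \<noteq> r \<longrightarrow> d i j = 0" unfolding dt_def by (metis (full_types))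
  have "d r j = 0" for j
  proof (cases "j < n")
    case True
    obtain u where u: "\<forall>i. d i j = (if i < m then (\<Sum>p<k. u p * Y p i) else 0)"
      using dcol True unfolding row_code_def by blast
    have "\<forall>l'<k. (\<Sum>p<k. u p * Y p (colr r l')) = 0"
    proof (intro allI impI)
      fix l' assume "l' < k"
      hence "colr r l' < m" "colr r l' \<noteq> r" using km unfolding colr_def by auto
      then show "(\<Sum>p<k. u p * Y p (colr r l')) = 0" using u zr by metis
    qed
    hence "\<forall>p<k. u p = 0" using det_indep[of k "\<lambda>i l. Y i (colr r l)" u] dt by blast
    then show ?thesis using u r by simp
  next
    case False then show ?thesis using dout by auto
  qed
  hence "\<forall>i j. d i j = 0" using zr by metis
  then show "c = c'" unfolding d_def by (intro ext) simp
qed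



definition rsub :: "nat \<Rightarrow> nat \<Rightarrow> nat \<Rightarrow> ((nat \<times> nat) + (nat \<times> nat) \<Rightarrow> 'k::field)
    \<Rightarrow> (nat \<times> nat) + (nat \<times> nat) \<Rightarrow> 'k" where
  "rsub k m r x v = (case v of Inl ij \<Rightarrow> (if fst ij < k \<and> snd ij < m then
       (if snd ij = r then 0 else x (Inl ij)) + x (Inl (fst ij, r)) * x (Inl (k, snd ij)) else x v)
     | Inr p \<Rightarrow> x v)"

lemma rsub_Inl: "rsub k m r x (Inl (i,j)) = (if i < k \<and> j < m then
       (if j = r then 0 else x (Inl (i,j))) + x (Inl (i, r)) * x (Inl (k, j)) else x (Inl (i,j)))"
  unfolding rsub_def by simp

lemma rsub_Inr[simp]: "rsub k m r x (Inr p) = x (Inr p)"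
  unfolding rsub_def by simp

lemma rsub_polyfun: "(\<lambda>x. rsub k m r x v) \<in> polyfun"
proof (cases v)
  case (Inl ij)
  obtain i j where ij: "ij = (i,j)" by fastforce
  show ?thesis
    unfolding Inl ij rsub_Inl
    by (cases "i < k \<and> j < m"; cases "j = r") (auto intro!: polyfun.add polyfun.mult polyfun.var polyfun.const)
next
  case (Inr p) then show ?thesis by (simp add: polyfun.var)
qed

lemma colr_inj: "colr r a = colr r b \<longleftrightarrow> a = b"
  unfolding colr_def by auto

lemma row_step:
  fixes E :: "(nat \<times> nat) set"
  assumes inf: "infinite (UNIV :: 'k::field set)"
    and E: "E \<in> MR_patterns TYPE('k) m n a b" and am: "a \<le> m" and r: "r < m"
  shows "E \<union> ({r} \<times> {0..<n}) \<in> MR_patterns TYPE('k) m n (min (a + 1) m) b"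
proof -
  have sub: "E \<union> ({r} \<times> {0..<n}) \<subseteq> {0..<m} \<times> {0..<n}"
    using E r unfolding MR_patterns_def by auto
  show ?thesis
  proof (cases "m \<le> a + 1 \<or> n \<le> b")
    case True
    then show ?thesis using sub unfolding MR_patterns_def by auto
  next
    case False
    define k where "k = m - (a + 1)"
    have mk: "m - min (a+1) m = k" "m - a = Suc k" "k < m" using False unfolding k_def by auto
    have gen: "generically (\<lambda>x :: (nat \<times> nat) + (nat \<times> nat) \<Rightarrow> 'k.
        correctable m n
          (tensor_code m n (row_code (Suc k) m (\<lambda>i j. x (Inl (i, j))))
                           (row_code (n - b) n (\<lambda>i j. x (Inr (i, j))))) E)"
      using E False unfolding MR_patterns_def mk(2) by auto
    obtain g :: "((nat \<times> nat) + (nat \<times> nat) \<Rightarrow> 'k) \<Rightarrow> 'k" where g: "g \<in> polyfun" "\<exists>x. g x \<noteq> 0"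
      and gP: "\<forall>x. g x \<noteq> 0 \<longrightarrow> correctable m n
          (tensor_code m n (row_code (Suc k) m (\<lambda>i j. x (Inl (i, j))))
                           (row_code (n - b) n (\<lambda>i j. x (Inr (i, j))))) E"
      using gen unfolding generically_def by blast
    define D where "D = (\<lambda>x::(nat \<times> nat) + (nat \<times> nat) \<Rightarrow> 'k. det (mat k k (\<lambda>(i,l). x (Inl (i, colr r l)))))"
    define f where "f = (\<lambda>x. g (rsub k m r x) * D x)"
    have Dp: "D \<in> polyfun" unfolding D_def
      by (rule polyfun_det[of "\<lambda>i l x. x (Inl (i, colr r l))" k, OF polyfun.var])
    have gr: "(\<lambda>x. g (rsub k m r x)) \<in> polyfun"
      by (rule polyfun_subst[OF g(1) rsub_polyfun])
    have fp: "f \<in> polyfun" unfolding f_def by (rule polyfun.mult[OF gr Dp])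
    have Dnz: "\<exists>x. D x \<noteq> 0"
    proof -
      define x1 :: "(nat \<times> nat) + (nat \<times> nat) \<Rightarrow> 'k" where
        "x1 = (\<lambda>v. case v of Inl ij \<Rightarrow> if snd ij = colr r (fst ij) then 1 else 0 | Inr _ \<Rightarrow> 0)"
      have "mat k k (\<lambda>(i,l). x1 (Inl (i, colr r l))) = 1\<^sub>m k"
        by (rule eq_matI) (auto simp: x1_def colr_inj)
      then show ?thesis unfolding D_def by (intro exI[of _ x1]) simp
    qed
    have grnz: "\<exists>x. g (rsub k m r x) \<noteq> 0"
    proof -
      have ex1: "\<exists>x::(nat \<times> nat) + (nat \<times> nat) \<Rightarrow> 'k. x (Inl (k, r)) \<noteq> 0"
        by (rule exI[of _ "\<lambda>_. 1"]) simp
      obtain x0 where x0: "g x0 \<noteq> 0" "x0 (Inl (k, r)) \<noteq> 0"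
        using common_nonzero[OF inf g(1) polyfun.var[of "Inl (k,r)"] g(2) ex1] by blast
      define w where "w = x0 (Inl (k, r))"
      define x1 where "x1 = (\<lambda>v. case v of Inl ij \<Rightarrow> (if fst ij < k \<and> snd ij < m then
          (if snd ij = r then x0 (Inl (fst ij, r)) / w
           else x0 (Inl ij) - x0 (Inl (fst ij, r)) / w * x0 (Inl (k, snd ij))) else x0 v)
        | Inr p \<Rightarrow> x0 v)"
      have "rsub k m r x1 = x0"
      proof
        fix v show "rsub k m r x1 v = x0 v"
        proof (cases v)
          case (Inl ij)
          obtain i j where ij: "ij = (i,j)" by fastforce
          show ?thesis using x0(2) r unfolding Inl ij rsub_Inl x1_def w_def by auto
        next
          case (Inr p) then show ?thesis unfolding x1_def by simp
        qed
      qed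
      then show ?thesis using x0 by metis
    qed
    have fnz: "\<exists>x. f x \<noteq> 0"
      using common_nonzero[OF inf gr Dp grnz Dnz] unfolding f_def by auto
    have fP: "correctable m n
          (tensor_code m n (row_code k m (\<lambda>i j. x (Inl (i, j))))
                           (row_code (n - b) n (\<lambda>i j. x (Inr (i, j))))) (E \<union> {r} \<times> {0..<n})"
      if fx: "f x \<noteq> 0" for x
    proof -
      have g1: "g (rsub k m r x) \<noteq> 0" and d1: "D x \<noteq> 0" using fx unfolding f_def by auto
      have c1: "correctable m n
          (tensor_code m n (row_code (Suc k) m (\<lambda>i j. rsub k m r x (Inl (i, j))))
                           (row_code (n - b) n (\<lambda>i j. x (Inr (i, j))))) E"
        using gP g1 by fastforce
      show ?thesis
      proof (rule row_core[OF r mk(3) _ c1])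
        show "\<forall>i<k. \<forall>j<m. rsub k m r x (Inl (i, j)) =
           (if j = r then 0 else x (Inl (i, j))) + x (Inl (i, r)) * rsub k m r x (Inl (k, j))"
          by (simp add: rsub_Inl)
        show "det (mat k k (\<lambda>(i, l). x (Inl (i, colr r l)))) \<noteq> 0" using d1 unfolding D_def .
      qed
    qed
    have "generically (\<lambda>x :: (nat \<times> nat) + (nat \<times> nat) \<Rightarrow> 'k.
        correctable m n
          (tensor_code m n (row_code (m - min (a+1) m) m (\<lambda>i j. x (Inl (i, j))))
                           (row_code (n - b) n (\<lambda>i j. x (Inr (i, j))))) (E \<union> {r} \<times> {0..<n}))"
      unfolding generically_def mk(1) using fp fnz fP by blast
    then show ?thesis using sub unfolding MR_patterns_def by blast
  qed
qed



lemma rows_step: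
  fixes E :: "(nat \<times> nat) set"
  assumes inf: "infinite (UNIV :: 'k::field set)" and A: "finite A" "A \<subseteq> {0..<m}"
    and E: "E \<in> MR_patterns TYPE('k) m n a b" and am: "a \<le> m"
  shows "E \<union> (A \<times> {0..<n}) \<in> MR_patterns TYPE('k) m n (min (a + card A) m) b"
  using A
proof (induction A rule: finite_induct)
  case empty
  then show ?case using E am by simp
next
  case (insert r A)
  have IH: "E \<union> (A \<times> {0..<n}) \<in> MR_patterns TYPE('k) m n (min (a + card A) m) b"
    using insert by simp
  have r: "r < m" using insert by simp
  have "(E \<union> (A \<times> {0..<n})) \<union> ({r} \<times> {0..<n}) \<in> MR_patterns TYPE('k) m n (min (min (a + card A) m + 1) m) b"
    by (rule row_step[OF inf IH _ r]) simp
  moreover have "(E \<union> (A \<times> {0..<n})) \<union> ({r} \<times> {0..<n}) = E \<union> (insert r A \<times> {0..<n})" by auto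
  moreover have "min (min (a + card A) m + 1) m = min (a + card (insert r A)) m"
    using insert by simp
  ultimately show ?case by simp
qed



definition swv :: "(nat \<times> nat) + (nat \<times> nat) \<Rightarrow> (nat \<times> nat) + (nat \<times> nat)" where
  "swv v = (case v of Inl p \<Rightarrow> Inr p | Inr p \<Rightarrow> Inl p)"

lemma swv_simps[simp]: "swv (Inl p) = Inr p" "swv (Inr p) = Inl p" "swv (swv v) = v"
  unfolding swv_def by (auto split: sum.split)

lemma tensor_transpose:
  "c \<in> tensor_code n m C2 C1 \<longleftrightarrow> (\<lambda>i j. c j i) \<in> tensor_code m n C1 C2"
  unfolding tensor_code_def mem_Collect_eq by (intro iffI; elim conjE; intro conjI) blast+

lemma correctable_transpose:
  assumes "correctable m n (tensor_code m n C1 C2) E"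
  shows "correctable n m (tensor_code n m C2 C1) (prod.swap ` E)"
  unfolding correctable_def
proof (intro ballI impI)
  fix c c' assume c: "c \<in> tensor_code n m C2 C1" and c': "c' \<in> tensor_code n m C2 C1"
    and ag: "\<forall>i<n. \<forall>j<m. (i, j) \<notin> prod.swap ` E \<longrightarrow> c i j = c' i j"
  have t1: "(\<lambda>i j. c j i) \<in> tensor_code m n C1 C2" using tensor_transpose[THEN iffD1, OF c] .
  have t2: "(\<lambda>i j. c' j i) \<in> tensor_code m n C1 C2" using tensor_transpose[THEN iffD1, OF c'] .
  have ag2: "\<forall>i<m. \<forall>j<n. (i, j) \<notin> E \<longrightarrow> c j i = c' j i"
  proof (intro allI impI)
    fix i j assume ij: "i < m" "j < n" "(i, j) \<notin> E"
    then have "(j, i) \<notin> prod.swap ` E" by (metis image_iff swap_swap swap_simp)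
    then show "c j i = c' j i" using ag ij by blast
  qed
  have eqt: "(\<lambda>i j. c j i) = (\<lambda>i j. c' j i)"
    by (rule assms[unfolded correctable_def, rule_format, OF t1 t2]) (use ag2 in simp)
  have "c j i = c' j i" for i j using fun_cong[OF fun_cong[OF eqt, of i], of j] by simp
  then show "c = c'" by (intro ext)
qed


lemma MR_transpose:
  fixes E :: "(nat \<times> nat) set"
  assumes E: "E \<in> MR_patterns TYPE('k::field) m n a b"
  shows "prod.swap ` E \<in> MR_patterns TYPE('k) n m b a"
proof -
  have sub: "prod.swap ` E \<subseteq> {0..<n} \<times> {0..<m}" using E unfolding MR_patterns_def by auto
  show ?thesis
  proof (cases "m \<le> a \<or> n \<le> b")
    case True then show ?thesis using sub unfolding MR_patterns_def by auto
  next
    case False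
    have gen: "generically (\<lambda>x :: (nat \<times> nat) + (nat \<times> nat) \<Rightarrow> 'k.
        correctable m n
          (tensor_code m n (row_code (m - a) m (\<lambda>i j. x (Inl (i, j))))
                           (row_code (n - b) n (\<lambda>i j. x (Inr (i, j))))) E)"
      using E False unfolding MR_patterns_def by auto
    obtain g :: "((nat \<times> nat) + (nat \<times> nat) \<Rightarrow> 'k) \<Rightarrow> 'k" where g: "g \<in> polyfun" "\<exists>x. g x \<noteq> 0"
      and gP: "\<forall>x. g x \<noteq> 0 \<longrightarrow> correctable m n
          (tensor_code m n (row_code (m - a) m (\<lambda>i j. x (Inl (i, j))))
                           (row_code (n - b) n (\<lambda>i j. x (Inr (i, j))))) E"
      using gen unfolding generically_def by blast
    define f where "f = (\<lambda>x. g (\<lambda>v. x (swv v)))"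
    have fp: "f \<in> polyfun" unfolding f_def
      by (rule polyfun_subst[OF g(1)]) (rule polyfun.var)
    obtain x0 where x0: "g x0 \<noteq> 0" using g by blast
    have "f (\<lambda>v. x0 (swv v)) = g x0" unfolding f_def by simp
    hence fnz: "\<exists>x. f x \<noteq> 0" using x0 by metis
    have fP: "correctable n m
          (tensor_code n m (row_code (n - b) n (\<lambda>i j. x (Inl (i, j))))
                           (row_code (m - a) m (\<lambda>i j. x (Inr (i, j))))) (prod.swap ` E)"
      if "f x \<noteq> 0" for x
    proof -
      have "correctable m n
          (tensor_code m n (row_code (m - a) m (\<lambda>i j. x (Inr (i, j))))
                           (row_code (n - b) n (\<lambda>i j. x (Inl (i, j))))) E"
        using gP[rule_format, of "\<lambda>v. x (swv v)"] that unfolding f_def by simp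
      then show ?thesis by (rule correctable_transpose)
    qed
    have "generically (\<lambda>x :: (nat \<times> nat) + (nat \<times> nat) \<Rightarrow> 'k.
        correctable n m
          (tensor_code n m (row_code (n - b) n (\<lambda>i j. x (Inl (i, j))))
                           (row_code (m - a) m (\<lambda>i j. x (Inr (i, j))))) (prod.swap ` E))"
      unfolding generically_def using fp fnz fP by blast
    then show ?thesis using sub unfolding MR_patterns_def by blast
  qed
qed

theorem lemma3p17:
  fixes E :: "(nat \<times> nat) set" and A B :: "nat set" and m n a b :: nat
  assumes "infinite (UNIV :: 'k::field set)"
    and "a \<le> m" and "b \<le> n"
    and "E \<in> MR_patterns TYPE('k) m n a b"
    and "A \<subseteq> {0..<m}" and "B \<subseteq> {0..<n}"
  shows "E \<union> (A \<times> {0..<n}) \<union> ({0..<m} \<times> B)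
           \<in> MR_patterns TYPE('k) m n (min (a + card A) m) (min (b + card B) n)"
proof -
  have fA: "finite A" using assms(5) finite_subset by blast
  have fB: "finite B" using assms(6) finite_subset by blast
  have E1: "E \<union> (A \<times> {0..<n}) \<in> MR_patterns TYPE('k) m n (min (a + card A) m) b"
    by (rule rows_step[OF assms(1) fA assms(5) assms(4) assms(2)])
  have T1: "prod.swap ` (E \<union> (A \<times> {0..<n})) \<in> MR_patterns TYPE('k) n m b (min (a + card A) m)"
    by (rule MR_transpose[OF E1])
  have T2: "prod.swap ` (E \<union> (A \<times> {0..<n})) \<union> (B \<times> {0..<m})
      \<in> MR_patterns TYPE('k) n m (min (b + card B) n) (min (a + card A) m)"
    by (rule rows_step[OF assms(1) fB assms(6) T1 assms(3)])
  have X: "prod.swap ` (prod.swap ` (E \<union> (A \<times> {0..<n})) \<union> (B \<times> {0..<m}))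
      \<in> MR_patterns TYPE('k) m n (min (a + card A) m) (min (b + card B) n)"
    by (rule MR_transpose[OF T2])
  have eq: "prod.swap ` (prod.swap ` (E \<union> (A \<times> {0..<n})) \<union> (B \<times> {0..<m}))
      = E \<union> (A \<times> {0..<n}) \<union> ({0..<m} \<times> B)"
    by (auto simp: image_Un image_image)
  from X show ?thesis unfolding eq .
qed

end
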